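(* Let $\lambda>0$ and let $\mathbf r_\lambda(t)$, $t\ge0$, be the uniformly rotating planar trajectory generated by a minimizer of $f+\lambda g$ (see context), regarded as a motion in $\mathbb R^3$ lying in the plane $z=0$, with velocities $\mathbf v(t)=\dot{\mathbf r}_\lambda(t)$. Let $\mathbf L=\mathbf L(\mathbf r_\lambda(t),\mathbf v(t))$ and $T=T(\mathbf v(t))$ (both constant in $t$), and assume $\mathbf L\ne0$, $T>0$. Then for every $t\ge0$ the state $(\mathbf r_\lambda(t),\mathbf v(t))$ minimizes $g(\mathbf r)$ over all $(\mathbf r,\mathbf v)\in\Omega$ with $\mathbf L(\mathbf r,\mathbf v)=\mathbf L$ and $T(\mathbf v)=T$.
   Context: Fix $N\ge2$, masses $m_i>0$, $\gamma>0$. Planar configuration space $\mathfrak R=\{\mathbf r\in(\mathbb R^2)^N:\ \mathbf r_i\neq\mathbf r_j \text{ for } i\neq j\}$; $f(\mathbf r)=\sum_{i<j}\frac{\gamma m_im_j}{|\mathbf r_j-\mathbf r_i|}$, $g(\mathbf r)=\sum_i m_i|\mathbf r_i|^2$. For a minimizer $\mathbf r_\lambda=(\mathbf r_{1\lambda},\dots,\mathbf r_{N\lambda})$ of $f+\lambda g$ on $\mathfrak R$, with $\mathbf r_{i\lambda}=|\mathbf r_{i\lambda}|(\cos\varphi_{i\lambda},\sin\varphi_{i\lambda})$ and $\omega=\sqrt{2\lambda}$, set $\mathbf r_{i\lambda}(t)=|\mathbf r_{i\lambda}|(\cos(\varphi_{i\lambda}+\omega t),\sin(\varphi_{i\lambda}+\omega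 t))$. Three-dimensional phase space $\Omega=\mathfrak R_3\times(\mathbb R^3)^N$, $\mathfrak R_3=\{\mathbf r\in(\mathbb R^3)^N:\mathbf r_i\ne\mathbf r_j,\ i\ne j\}$; $\mathbf L(\mathbf r,\mathbf v)=\sum_im_i\mathbf r_i\times\mathbf v_i$, $T(\mathbf v)=\frac12\sum_im_i|\mathbf v_i|^2$, $g(\mathbf r)=\sum_im_i|\mathbf r_i|^2$. *)

theory Defs
  imports "HOL-Analysis.Analysis" "HOL-Analysis.Cross3"
begin

text \<open>Particles are indexed by i < N; configurations are functions nat => vector,
  only the values at i < N matter.\<close>

definition config :: "nat \<Rightarrow> (nat \<Rightarrow> 'a) set" where
  "config N = {r. \<forall>i<N. \<forall>j<N. i \<noteq> j \<longrightarrow> r i \<noteq> r j}"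

definition fpot :: "nat \<Rightarrow> real \<Rightarrow> (nat \<Rightarrow> real) \<Rightarrow> (nat \<Rightarrow> 'a::real_normed_vector) \<Rightarrow> real" where
  "fpot N \<gamma> m r = (\<Sum>j<N. \<Sum>i<j. \<gamma> * m i * m j / norm (r j - r i))"

definition gmom :: "nat \<Rightarrow> (nat \<Rightarrow> real) \<Rightarrow> (nat \<Rightarrow> 'a::real_normed_vector) \<Rightarrow> real" where
  "gmom N m r = (\<Sum>i<N. m i * (norm (r i))\<^sup>2)"

definition angmom :: "nat \<Rightarrow> (nat \<Rightarrow> real) \<Rightarrow> (nat \<Rightarrow> real^3) \<Rightarrow> (nat \<Rightarrow> real^3) \<Rightarrow> real^3" where
  "angmom N m r v = (\<Sum>i<N. m i *\<^sub>R cross3 (r i) (v i))"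

definition kin :: "nat \<Rightarrow> (nat \<Rightarrow> real) \<Rightarrow> (nat \<Rightarrow> real^3) \<Rightarrow> real" where
  "kin N m v = (1/2) * (\<Sum>i<N. m i * (norm (v i))\<^sup>2)"

definition phase :: "nat \<Rightarrow> ((nat \<Rightarrow> real^3) \<times> (nat \<Rightarrow> real^3)) set" where
  "phase N = config N \<times> UNIV"

definition is_minimizer :: "nat \<Rightarrow> real \<Rightarrow> (nat \<Rightarrow> real) \<Rightarrow> real \<Rightarrow> (nat \<Rightarrow> real^2) \<Rightarrow> bool" where
  "is_minimizer N \<gamma> m lam r0 \<longleftrightarrow> r0 \<in> config N \<and>
     (\<forall>r::nat \<Rightarrow> real^2. r \<in> config N \<longrightarrow> fpot N \<gamma> m r0 + lam * gmom N m r0 \<le> fpot N \<gamma> m r + lam * gmom N m r)"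

definition rot_traj :: "(nat \<Rightarrow> real^2) \<Rightarrow> (nat \<Rightarrow> real) \<Rightarrow> real \<Rightarrow> real \<Rightarrow> nat \<Rightarrow> real^3" where
  "rot_traj r0 \<phi> \<omega> t i = vector [norm (r0 i) * cos (\<phi> i + \<omega> * t), norm (r0 i) * sin (\<phi> i + \<omega> * t), 0]"

end

theory Submission
  imports Defs
begin

lemma vec3_decomp: "vector [x, y, 0] = x *\<^sub>R (vector [1,0,0] :: real^3) + y *\<^sub>R vector [0,1,0]"
  by (simp add: vec_eq_iff forall_3 vector_3)

lemma norm_vec3_sq: "(norm (vector [x, y, z] :: real^3))\<^sup>2 = x\<^sup>2 + y\<^sup>2 + z\<^sup>2"
  unfolding power2_norm_eq_inner by (simp add: inner_vec_def sum_3 vector_3 power2_eq_square)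

lemma cross_vec3: "cross3 (vector [a, b, 0]) (vector [c, d, 0]) = vector [0, 0, a*d - b*c]"
  by (simp add: cross3_simps forall_3 vector_3)

lemma norm_cross_le: "norm (cross3 x y) \<le> norm x * norm y"
proof -
  have "(norm (cross3 x y))\<^sup>2 \<le> (norm x * norm y)\<^sup>2" using norm_cross_dot[of x y]
    by (metis le_add_same_cancel1 zero_le_power2)
  then show ?thesis by (simp add: power2_le_iff_abs_le)
qed

lemma rot_deriv:
  "((\<lambda>s. rot_traj r0 \<phi> \<omega> s i) has_vector_derivative
     vector [- (norm (r0 i) * \<omega> * sin (\<phi> i + \<omega> * t)), norm (r0 i) * \<omega> * cos (\<phi> i + \<omega> * t), 0]) (at t within S)"
proof -
  have e: "(\<lambda>s. rot_traj r0 \<phi> \<omega> s i) = (\<lambda>s. (norm (r0 i) * cos (\<phi> i + \<omega> * s)) *\<^sub>R (vector [1,0,0] :: real^3)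
     + (norm (r0 i) * sin (\<phi> i + \<omega> * s)) *\<^sub>R vector [0,1,0])"
    unfolding rot_traj_def by (intro ext, rule vec3_decomp)
  have "((\<lambda>s. (norm (r0 i) * cos (\<phi> i + \<omega> * s)) *\<^sub>R (vector [1,0,0] :: real^3)
     + (norm (r0 i) * sin (\<phi> i + \<omega> * s)) *\<^sub>R vector [0,1,0]) has_vector_derivative
     (- (norm (r0 i) * \<omega> * sin (\<phi> i + \<omega> * t))) *\<^sub>R (vector [1,0,0] :: real^3)
     + (norm (r0 i) * \<omega> * cos (\<phi> i + \<omega> * t)) *\<^sub>R vector [0,1,0]) (at t within S)"
    apply (auto intro!: derivative_eq_intros has_vector_derivative_add has_vector_derivative_scaleR
         simp: has_real_derivative_iff_has_vector_derivative[symmetric])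
    apply (simp only: mult.commute mult.left_commute mult.assoc)
    done
  then show ?thesis unfolding e vec3_decomp[of "- (norm (r0 i) * \<omega> * sin (\<phi> i + \<omega> * t))" "norm (r0 i) * \<omega> * cos (\<phi> i + \<omega> * t)"] .
qed


lemma scale_vec2: "c *\<^sub>R vector [x, y] = (vector [c * x, c * y] :: real^2)"
  by (simp add: vec_eq_iff forall_2 vector_2)

lemma amgm_w: assumes "(w::real) > 0" shows "x * y \<le> (w * x\<^sup>2 + y\<^sup>2 / w) / 2"
proof -
  have "0 \<le> (w*x - y)\<^sup>2" by simp
  also have "... = w * (w * x\<^sup>2 + y\<^sup>2 / w - 2 * x * y)" using assms
    by (simp add: field_simps power2_eq_square)
  finally have "0 \<le> w * x\<^sup>2 + y\<^sup>2 / w - 2 * x * y" using assms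
    by (simp add: zero_le_mult_iff)
  then show ?thesis by simp
qed

theorem theorem10p2:
  fixes N :: nat and m :: "nat \<Rightarrow> real" and \<gamma> lam :: real
    and rlam :: "nat \<Rightarrow> real^2" and \<phi> :: "nat \<Rightarrow> real"
    and v :: "real \<Rightarrow> nat \<Rightarrow> real^3"
  assumes "N \<ge> 2" and "\<forall>i<N. m i > 0" and "\<gamma> > 0" and "lam > 0"
    and "is_minimizer N \<gamma> m lam rlam"
    and "\<forall>i<N. rlam i = norm (rlam i) *\<^sub>R vector [cos (\<phi> i), sin (\<phi> i)]"
    and "\<forall>t\<ge>0. \<forall>i<N. ((\<lambda>s. rot_traj rlam \<phi> (sqrt (2 * lam)) s i) has_vector_derivative v t i)
            (at t within {0..})"
    and "angmom N m (rot_traj rlam \<phi> (sqrt (2 * lam)) 0) (v 0) \<noteq> 0"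
    and "kin N m (v 0) > 0"
  shows "\<forall>t\<ge>0. (rot_traj rlam \<phi> (sqrt (2 * lam)) t, v t) \<in> phase N \<and>
     (\<forall>r w. (r, w) \<in> phase N \<and>
        angmom N m r w = angmom N m (rot_traj rlam \<phi> (sqrt (2 * lam)) t) (v t) \<and>
        kin N m w = kin N m (v t)
        \<longrightarrow> gmom N m (rot_traj rlam \<phi> (sqrt (2 * lam)) t) \<le> gmom N m r)"
proof (intro allI impI)
  fix t :: real assume t0: "t \<ge> 0"
  define \<omega> where "\<omega> = sqrt (2 * lam)"
  have wpos: "\<omega> > 0" unfolding \<omega>_def using assms(4) by simp
  define R where "R = rot_traj rlam \<phi> \<omega> t"
  define a where "a i = norm (rlam i)" for i
  define c where "c i = cos (\<phi> i + \<omega> * t)" for i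
  define s where "s i = sin (\<phi> i + \<omega> * t)" for i
  have cs: "(c i)\<^sup>2 + (s i)\<^sup>2 = 1" for i unfolding c_def s_def by (simp add: add.commute)
  have Ri: "R i = vector [a i * c i, a i * s i, 0]" for i
    unfolding R_def rot_traj_def a_def c_def s_def by simp
  have vt: "v t i = vector [- (a i * \<omega> * s i), a i * \<omega> * c i, 0]" if "i < N" for i
  proof -
    have nb: "at t within {0..t+1} \<noteq> bot"
      using t0 trivial_limit_within[of t "{0..t+1}"] islimpt_Icc[of 0 "t+1" t] by simp
    have d1: "((\<lambda>s. rot_traj rlam \<phi> \<omega> s i) has_vector_derivative v t i) (at t within {0..t+1})"
      using assms(7) t0 that unfolding \<omega>_def
      by (meson has_vector_derivative_within_subset atLeastAtMost_iff atLeast_iff subsetI)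
    show ?thesis using vector_derivative_unique_within[OF nb d1 rot_deriv]
      unfolding a_def s_def c_def by simp
  qed
  define g0 where "g0 = (\<Sum>i<N. m i * (a i)\<^sup>2)"
  have g0nn: "g0 \<ge> 0" unfolding g0_def using assms(2) by (intro sum_nonneg) auto
  have gR: "gmom N m R = g0"
  proof -
    have "(norm (R i))\<^sup>2 = (a i)\<^sup>2" for i
    proof -
      have "(norm (R i))\<^sup>2 = (a i)\<^sup>2 * ((c i)\<^sup>2 + (s i)\<^sup>2)" unfolding Ri norm_vec3_sq
        by (simp add: power_mult_distrib algebra_simps)
      then show ?thesis using cs by simp
    qed
    then show ?thesis unfolding gmom_def g0_def by simp
  qed
  have kv: "kin N m (v t) = (1/2) * (\<omega>\<^sup>2 * g0)"
  proof -
    have "(norm (v t i))\<^sup>2 = \<omega>\<^sup>2 * (a i)\<^sup>2" if "i < N" for i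
    proof -
      have "(norm (v t i))\<^sup>2 = \<omega>\<^sup>2 * (a i)\<^sup>2 * ((c i)\<^sup>2 + (s i)\<^sup>2)" unfolding vt[OF that] norm_vec3_sq
        by (simp add: power_mult_distrib algebra_simps)
      then show ?thesis using cs by simp
    qed
    then have "(\<Sum>i<N. m i * (norm (v t i))\<^sup>2) = (\<Sum>i<N. \<omega>\<^sup>2 * (m i * (a i)\<^sup>2))"
      by (intro sum.cong) auto
    then show ?thesis unfolding kin_def g0_def by (simp add: sum_distrib_left)
  qed
  have Lv: "angmom N m R (v t) = (\<omega> * g0) *\<^sub>R (vector [0,0,1] :: real^3)"
  proof -
    have "m i *\<^sub>R cross3 (R i) (v t i) = (\<omega> * (m i * (a i)\<^sup>2)) *\<^sub>R (vector [0,0,1] :: real^3)"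
      if "i < N" for i
    proof -
      have "cross3 (R i) (v t i) = vector [0, 0, (a i)\<^sup>2 * \<omega> * ((c i)\<^sup>2 + (s i)\<^sup>2)]"
        unfolding Ri vt[OF that] cross_vec3 by (simp add: power2_eq_square algebra_simps)
      also have "... = ((a i)\<^sup>2 * \<omega>) *\<^sub>R (vector [0,0,1] :: real^3)"
        using cs by (simp add: vec_eq_iff forall_3 vector_3)
      finally show ?thesis by simp
    qed
    then have "angmom N m R (v t) = (\<Sum>i<N. (\<omega> * (m i * (a i)\<^sup>2)) *\<^sub>R (vector [0,0,1] :: real^3))"
      unfolding angmom_def by (intro sum.cong) auto
    also have "... = (\<Sum>i<N. \<omega> * (m i * (a i)\<^sup>2)) *\<^sub>R (vector [0,0,1] :: real^3)"
      by (simp add: scaleR_sum_left)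
    finally show ?thesis unfolding g0_def by (simp add: sum_distrib_left)
  qed
  have ne3: "norm (vector [0,0,1] :: real^3) = 1"
  proof -
    have "(norm (vector [0,0,1] :: real^3))\<^sup>2 = 1" unfolding norm_vec3_sq by simp
    then have "norm (vector [0,0,1] :: real^3) = 1 \<or> norm (vector [0,0,1] :: real^3) = -1"
      by (simp add: power2_eq_1_iff)
    then show ?thesis using norm_ge_zero[of "vector [0,0,1] :: real^3"] by linarith
  qed
  have nL: "norm (angmom N m R (v t)) = \<omega> * g0"
    unfolding Lv using wpos g0nn ne3 by simp
  have conf: "R \<in> config N"
  proof -
    have cfg: "rlam \<in> config N" using assms(5) unfolding is_minimizer_def by simp
    show ?thesis unfolding config_def
    proof (intro CollectI allI impI)
      fix i j assume ij: "i < N" "j < N" "i \<noteq> j"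
      show "R i \<noteq> R j"
      proof
        assume eq: "R i = R j"
        have e1: "a i * c i = a j * c j" using arg_cong[OF eq, of "\<lambda>x. x $ 1"] unfolding Ri by simp
        have e2: "a i * s i = a j * s j" using arg_cong[OF eq, of "\<lambda>x. x $ 2"] unfolding Ri by simp
        have cc: "cos (\<phi> k) = c k * cos (\<omega> * t) + s k * sin (\<omega> * t)" for k
          unfolding c_def s_def using cos_diff[of "\<phi> k + \<omega> * t" "\<omega> * t"] by simp
        have ss: "sin (\<phi> k) = s k * cos (\<omega> * t) - c k * sin (\<omega> * t)" for k
          unfolding c_def s_def using sin_diff[of "\<phi> k + \<omega> * t" "\<omega> * t"] by simp
        have g1: "a k * cos (\<phi> k) = (a k * c k) * cos (\<omega> * t) + (a k * s k) * sin (\<omega> * t)" for k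
          unfolding cc by (simp add: algebra_simps)
        have g2: "a k * sin (\<phi> k) = (a k * s k) * cos (\<omega> * t) - (a k * c k) * sin (\<omega> * t)" for k
          unfolding ss by (simp add: algebra_simps)
        have f1: "a i * cos (\<phi> i) = a j * cos (\<phi> j)" using g1[of i] g1[of j] e1 e2 by simp
        have f2: "a i * sin (\<phi> i) = a j * sin (\<phi> j)" using g2[of i] g2[of j] e1 e2 by simp
        have rv: "rlam k = vector [a k * cos (\<phi> k), a k * sin (\<phi> k)]" if "k < N" for k
          using assms(6) that unfolding a_def scale_vec2 by simp
        have "rlam i = rlam j" using rv[of i] rv[of j] ij f1 f2 by simp
        then show False using cfg ij unfolding config_def by auto
      qed
    qed
  qed
  show "(rot_traj rlam \<phi> (sqrt (2 * lam)) t, v t) \<in> phase N \<and>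
     (\<forall>r w. (r, w) \<in> phase N \<and>
        angmom N m r w = angmom N m (rot_traj rlam \<phi> (sqrt (2 * lam)) t) (v t) \<and>
        kin N m w = kin N m (v t)
        \<longrightarrow> gmom N m (rot_traj rlam \<phi> (sqrt (2 * lam)) t) \<le> gmom N m r)"
  proof (fold \<omega>_def R_def, intro conjI allI impI)
    show "(R, v t) \<in> phase N" using conf unfolding phase_def by simp
    fix r w assume H: "(r, w) \<in> phase N \<and> angmom N m r w = angmom N m R (v t) \<and> kin N m w = kin N m (v t)"
    have kw: "(\<Sum>i<N. m i * (norm (w i))\<^sup>2) = \<omega>\<^sup>2 * g0" using H kv unfolding kin_def by simp
    have "\<omega> * g0 = norm (angmom N m r w)" using H nL by simp
    also have "... \<le> (\<Sum>i<N. norm (m i *\<^sub>R cross3 (r i) (w i)))" unfolding angmom_def by (rule norm_sum)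
    also have "... \<le> (\<Sum>i<N. m i * ((\<omega> * (norm (r i))\<^sup>2 + (norm (w i))\<^sup>2 / \<omega>) / 2))"
    proof (rule sum_mono)
      fix i assume "i \<in> {..<N}"
      then have mi: "m i > 0" using assms(2) by simp
      have "norm (m i *\<^sub>R cross3 (r i) (w i)) = m i * norm (cross3 (r i) (w i))" using mi by simp
      also have "... \<le> m i * (norm (r i) * norm (w i))" using mi norm_cross_le by (simp add: mult_left_mono)
      also have "... \<le> m i * ((\<omega> * (norm (r i))\<^sup>2 + (norm (w i))\<^sup>2 / \<omega>) / 2)"
        using mult_left_mono[OF amgm_w[OF wpos, of "norm (r i)" "norm (w i)"]] mi by simp
      finally show "norm (m i *\<^sub>R cross3 (r i) (w i)) \<le> m i * ((\<omega> * (norm (r i))\<^sup>2 + (norm (w i))\<^sup>2 / \<omega>) / 2)" .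
    qed
    also have "... = (\<omega> * gmom N m r + (\<Sum>i<N. m i * (norm (w i))\<^sup>2) / \<omega>) / 2"
    proof -
      have "(\<Sum>i<N. m i * ((\<omega> * (norm (r i))\<^sup>2 + (norm (w i))\<^sup>2 / \<omega>) / 2))
          = (\<Sum>i<N. (\<omega> * (m i * (norm (r i))\<^sup>2) + (m i * (norm (w i))\<^sup>2) / \<omega>) / 2)"
        using wpos by (intro sum.cong) (auto simp: field_simps)
      also have "... = (\<omega> * gmom N m r + (\<Sum>i<N. m i * (norm (w i))\<^sup>2) / \<omega>) / 2"
        by (simp only: gmom_def sum_divide_distrib[symmetric] sum.distrib sum_distrib_left[symmetric])
      finally show ?thesis .
    qed
    also have "... = (\<omega> * gmom N m r + \<omega> * g0) / 2" using wpos kw by (simp add: power2_eq_square)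
    finally have "\<omega> * g0 \<le> \<omega> * gmom N m r" by simp
    then show "gmom N m R \<le> gmom N m r" using gR wpos by simp
  qed
qed

end
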